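(* For every positive integer $n$ there is a number $M$ such that for every prime $p>M$, the number $np$ satisfies Condition 1 with $p$ and another prime; that is, there is a prime $q\ne p$ such that for every integer $k$ with $1\le k\le np-1$, $\binom{np}{k}$ is divisible by $p$ or by $q$.
   Context: A positive integer $N$ satisfies Condition 1 with primes $p$ and $q$ if for all integers $k$ with $1\le k\le N-1$ the binomial coefficient $\binom{N}{k}$ is divisible by at least one of $p$ or $q$. *)

theory Defs
  imports "HOL-Computational_Algebra.Primes"
begin

definition condition1 :: "nat \<Rightarrow> nat \<Rightarrow> nat \<Rightarrow> bool" where
  "condition1 N p q \<longleftrightarrow>
     prime p \<and> prime q \<and> (\<forall>k. 1 \<le> k \<and> k \<le> N - 1 \<longrightarrow> p dvd (N choose k) \<or> q dvd (N choose k))"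

end

theory Submission
  imports Defs
begin

lemma pp_dvd_choose:
  fixes q l i :: nat
  assumes q: "prime q" and l: "0 < l" "l < q ^ i"
  shows "q dvd (q ^ i choose l)"
proof (rule ccontr)
  assume nd: "\<not> q dvd (q ^ i choose l)"
  have "l * (q ^ i choose l) = q ^ i * ((q ^ i - 1) choose (l - 1))"
    using l(1) by (rule times_binomial_minus1_eq)
  hence "q ^ i dvd l * (q ^ i choose l)" by simp
  moreover have "coprime (q ^ i) (q ^ i choose l)"
    using nd q by (simp add: prime_imp_coprime)
  ultimately have "q ^ i dvd l" by (simp add: coprime_dvd_mult_left_iff)
  hence "q ^ i \<le> l" using l by (simp add: dvd_imp_le)
  thus False using l by simp
qed

lemma step_dvd:
  fixes q i N m :: nat
  assumes q: "prime q" and NQ: "q ^ i \<le> N"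
    and h1: "q dvd ((N - q ^ i) choose m)"
    and h2: "q ^ i \<le> m \<Longrightarrow> q dvd ((N - q ^ i) choose (m - q ^ i))"
  shows "q dvd (N choose m)"
proof -
  let ?Q = "q ^ i"
  have "N choose m = (\<Sum>l\<le>m. (?Q choose l) * ((N - ?Q) choose (m - l)))"
    using vandermonde[of ?Q "N - ?Q" m] NQ by simp
  also have "q dvd \<dots>"
  proof (rule dvd_sum)
    fix l assume lm: "l \<in> {..m}"
    show "q dvd (?Q choose l) * ((N - ?Q) choose (m - l))"
    proof (cases "l = 0")
      case True thus ?thesis using h1 by simp
    next
      case False
      show ?thesis
      proof (cases "l < ?Q")
        case True thus ?thesis using pp_dvd_choose[OF q] False by simp
      next
        case nl: False
        show ?thesis
        proof (cases "l = ?Q")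
          case True thus ?thesis using h2 lm by simp
        next
          case False hence "?Q < l" using nl by simp
          hence "(?Q choose l) = 0" by (simp add: binomial_eq_0)
          thus ?thesis by (metis mult_zero_left dvd_0_right)
        qed
      qed
    qed
  qed
  finally show ?thesis .
qed

lemma carry_dvd:
  fixes q i :: nat
  assumes q: "prime q"
  shows "m mod q ^ i > N mod q ^ i \<Longrightarrow> q dvd (N choose m)"
proof (induction N arbitrary: m rule: less_induct)
  case (less N)
  let ?Q = "q ^ i"
  have Qpos: "?Q > 0" using q by (simp add: prime_gt_0_nat)
  show ?case
  proof (cases "N < ?Q")
    case True
    hence "N mod ?Q = N" by simp
    moreover have "m mod ?Q \<le> m" by simp
    ultimately have "N < m" using less.prems by linarith
    hence "N choose m = 0" by (simp add: binomial_eq_0)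
    thus ?thesis by (metis dvd_0_right)
  next
    case False
    hence NQ: "?Q \<le> N" by simp
    have lt: "N - ?Q < N" using Qpos NQ by linarith
    have e1: "(N - ?Q) mod ?Q = N mod ?Q" using NQ by (simp add: le_mod_geq)
    show ?thesis
    proof (rule step_dvd[OF q NQ])
      show "q dvd ((N - ?Q) choose m)" using less.IH[OF lt] less.prems e1 by simp
    next
      assume mQ: "?Q \<le> m"
      have "(m - ?Q) mod ?Q = m mod ?Q" using mQ by (simp add: le_mod_geq)
      thus "q dvd ((N - ?Q) choose (m - ?Q))" using less.IH[OF lt] less.prems e1 by simp
    qed
  qed
qed

lemma mod_neg:
  fixes p j Q :: nat
  assumes "Q dvd p + 1" "1 \<le> j" "j < Q"
  shows "(p * j) mod Q = Q - j"
proof -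
  have "p * j + j = (p + 1) * j" by (simp add: algebra_simps)
  hence "Q dvd p * j + j" using assms(1) by (metis dvd_mult2)
  hence "(p * j + j) mod Q = 0" by simp
  hence "((p * j) mod Q + j) mod Q = 0" by (simp add: mod_add_left_eq)
  hence d: "Q dvd (p * j) mod Q + j" by (simp add: dvd_eq_mod_eq_0)
  have lt: "(p * j) mod Q < Q" using assms by simp
  have pos: "0 < (p * j) mod Q + j" using assms by simp
  from d obtain c where c: "(p * j) mod Q + j = Q * c" by (auto elim: dvdE)
  have "c \<ge> 1" using pos c by (cases c) auto
  moreover have "c < 2" using c lt assms(3)
    by (metis add_less_mono mult_2_right mult_less_cancel1 not_less_zero)
  ultimately have "c = 1" by simp
  thus ?thesis using c by simp
qed

lemma exists_pp:
  fixes n p :: nat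
  assumes "n \<ge> 1" "fact n < p"
  shows "\<exists>q i. prime q \<and> q ^ i dvd p + 1 \<and> n < q ^ i"
proof (rule ccontr)
  assume H: "\<not> ?thesis"
  have "p + 1 dvd fact n"
  proof (rule multiplicity_le_imp_dvd)
    show "p + 1 \<noteq> 0" by simp
  next
    fix q :: nat assume q: "prime q"
    let ?e = "multiplicity q (p + 1)"
    have d: "q ^ ?e dvd p + 1" by (rule multiplicity_dvd)
    hence "q ^ ?e \<le> n" using H q by (meson not_less)
    moreover have "1 \<le> q ^ ?e" using prime_gt_0_nat[OF q] by simp
    ultimately have "q ^ ?e dvd fact n" by (simp add: dvd_fact)
    thus "?e \<le> multiplicity q (fact n)"
      using q by (intro multiplicity_geI) (auto simp: fact_nonzero)
  qed
  hence "p + 1 \<le> fact n" by (simp add: dvd_imp_le)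
  thus False using assms by simp
qed

theorem mainTheorem2:
  fixes n :: nat
  assumes "n \<ge> 1"
  shows "\<exists>M. \<forall>p. prime p \<and> p > M \<longrightarrow>
           (\<exists>q. prime q \<and> q \<noteq> p \<and> condition1 (n * p) p q)"
proof (rule exI[of _ "fact n"], intro allI impI)
  fix p :: nat
  assume pp: "prime p \<and> p > fact n"
  hence p: "prime p" and pM: "p > fact n" by auto
  have np: "n < p" using pM fact_ge_self[of n] by linarith
  obtain q i where q: "prime q" and Qd: "q ^ i dvd p + 1" and Qn: "n < q ^ i"
    using exists_pp[OF assms pM] by blast
  have qp: "q \<noteq> p"
  proof
    assume "q = p"
    hence "p dvd p + 1" using Qd Qn
      by (metis dvd_power dvd_trans gr0I less_one not_less power_0 assms less_le_trans)
    thus False using p by (metis dvd_add_right_iff dvd_refl not_prime_1 nat_dvd_1_iff_1)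
  qed
  have "condition1 (n * p) p q"
    unfolding condition1_def
  proof (intro conjI p q allI impI)
    fix k assume k: "1 \<le> k \<and> k \<le> n * p - 1"
    show "p dvd (n * p choose k) \<or> q dvd (n * p choose k)"
    proof (cases "p dvd k")
      case False
      have "k mod p ^ 1 > (n * p) mod p ^ 1" using False by (simp add: dvd_eq_mod_eq_0)
      hence "p dvd (n * p choose k)" by (rule carry_dvd[OF p])
      thus ?thesis by simp
    next
      case True
      then obtain j where kj: "k = p * j" by (auto elim: dvdE)
      have j1: "1 \<le> j" using k kj by (cases j) auto
      have jn: "j < n"
      proof (rule ccontr)
        assume "\<not> j < n"
        hence "n * p \<le> k" using kj by (simp add: mult.commute)
        thus False using k p by linarith
      qed
      have e1: "(p * j) mod q ^ i = q ^ i - j" using mod_neg[OF Qd j1] jn Qn by simp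
      have e2: "(p * n) mod q ^ i = q ^ i - n" using mod_neg[OF Qd assms Qn] .
      have "k mod q ^ i > (n * p) mod q ^ i"
        using e1 e2 kj jn Qn by (simp add: mult.commute)
      hence "q dvd (n * p choose k)" by (rule carry_dvd[OF q])
      thus ?thesis by simp
    qed
  qed
  thus "\<exists>q. prime q \<and> q \<noteq> p \<and> condition1 (n * p) p q" using q qp by blast
qed

end
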